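(* Let $G$ be a solvable group and let $H$ be a subgroup of $G$ with $H\le G'$ (i.e. $r_{ab}(H)=0$). If $H$ is verbally closed in $G$, then $H=1$.
   Context: $G'$ is the derived subgroup of $G$. A subgroup $H\le G$ is verbally closed in $G$ if for every group word $w(x_1,\dots,x_n)$ (without constants) and every $h\in H$, if the equation $w(x_1,\dots,x_n)=h$ has a solution in $G$, then it has a solution in $H$. *)

theory Defs
  imports "HOL-Algebra.Solvable_Groups"
begin

text \<open>A group word w(x_1,...,x_n) without constants: a list of letters; a letter (i, True)
  stands for x_i and (i, False) for x_i^{-1}.  Unreduced words are allowed; they define
  the same word maps as their free reductions.\<close>
type_synonym word = "(nat \<times> bool) list"

fun word_eval :: "('a, 'b) monoid_scheme \<Rightarrow> word \<Rightarrow> (nat \<Rightarrow> 'a) \<Rightarrow> 'a" where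
  "word_eval G [] f = \<one>\<^bsub>G\<^esub>"
| "word_eval G ((i, e) # w) f =
     (if e then f i else inv\<^bsub>G\<^esub> (f i)) \<otimes>\<^bsub>G\<^esub> word_eval G w f"

definition has_solution_in :: "('a, 'b) monoid_scheme \<Rightarrow> 'a set \<Rightarrow> word \<Rightarrow> 'a \<Rightarrow> bool" where
  "has_solution_in G S w h \<longleftrightarrow> (\<exists>f. (\<forall>i. f i \<in> S) \<and> word_eval G w f = h)"

definition verbally_closed :: "('a, 'b) monoid_scheme \<Rightarrow> 'a set \<Rightarrow> bool" where
  "verbally_closed G H \<longleftrightarrow>
     (\<forall>w. \<forall>h\<in>H. has_solution_in G (carrier G) w h \<longrightarrow> has_solution_in G H w h)"

end

theory Submission
  imports Defs
begin

definition goodw :: "('a, 'b) monoid_scheme \<Rightarrow> word \<Rightarrow> bool" where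
  "goodw G w \<longleftrightarrow> (\<forall>T f. subgroup T G \<longrightarrow> (\<forall>i. f i \<in> T) \<longrightarrow> word_eval G w f \<in> derived G T)"

lemma word_eval_carrier:
  assumes "group G" "\<forall>i. f i \<in> carrier G"
  shows "word_eval G w f \<in> carrier G"
proof -
  interpret group G by fact
  show ?thesis using assms(2) by (induction w) auto
qed

lemma word_eval_append:
  assumes "group G" "\<forall>i. f i \<in> carrier G"
  shows "word_eval G (w1 @ w2) f = word_eval G w1 f \<otimes>\<^bsub>G\<^esub> word_eval G w2 f"
proof (induction w1)
  case Nil
  then show ?case using assms word_eval_carrier[OF assms] by (simp add: group.is_monoid monoid.l_one)
next
  case (Cons a w1)
  obtain i e where a: "a = (i, e)" by fastforce
  interpret group G by fact
  have c: "word_eval G w1 f \<in> carrier G" "word_eval G w2 f \<in> carrier G"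
    using word_eval_carrier[OF assms] by auto
  show ?case using Cons a c assms(2) by (simp add: m_assoc)
qed

lemma word_eval_map:
  "word_eval G (map (\<lambda>(i, e). (g i, e)) w) f = word_eval G w (f \<circ> g)"
  by (induction w) auto

lemma goodw_map: "goodw G w \<Longrightarrow> goodw G (map (\<lambda>(i, e). (g i, e)) w)"
  unfolding goodw_def word_eval_map by auto

lemma goodw_append:
  assumes "group G" "goodw G w1" "goodw G w2" shows "goodw G (w1 @ w2)"
  unfolding goodw_def
proof (intro allI impI)
  fix T and f :: "nat \<Rightarrow> _" assume T: "subgroup T G" and f: "\<forall>i. f i \<in> T"
  interpret group G by fact
  have fc: "\<forall>i. f i \<in> carrier G" using f subgroup.subset[OF T] by auto
  have "subgroup (derived G T) G" using derived_is_subgroup subgroup.subset[OF T] by auto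
  then show "word_eval G (w1 @ w2) f \<in> derived G T"
    using assms(2,3) T f unfolding goodw_def word_eval_append[OF assms(1) fc]
    by (auto intro: subgroup.m_closed)
qed

lemma (in group) derived_words:
  assumes "x \<in> derived G S" "subgroup S G"
  shows "\<exists>w f. (\<forall>i. f i \<in> S) \<and> word_eval G w f = x \<and> goodw G w"
  using assms(1) unfolding derived_def
proof (induction rule: generate.induct)
  case one
  have "goodw G []" unfolding goodw_def
  proof (intro allI impI)
    fix T and f :: "nat \<Rightarrow> _" assume T: "subgroup T G"
    show "word_eval G [] f \<in> derived G T"
      using subgroup.one_closed[OF derived_is_subgroup[OF subgroup.subset[OF T]]] by simp
  qed
  moreover have "\<forall>i::nat. \<one> \<in> S" using subgroup.one_closed[OF assms(2)] by simp
  ultimately show ?case by (intro exI[of _ "[]"] exI[of _ "\<lambda>_. \<one>"]) simp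
next
  case (incl h)
  then obtain a b where ab: "a \<in> S" "b \<in> S" "h = a \<otimes> b \<otimes> inv a \<otimes> inv b" by blast
  have Sc: "S \<subseteq> carrier G" using subgroup.subset[OF assms(2)] .
  let ?w = "[(0::nat,True),(1,True),(0,False),(1,False)]"
  let ?f = "\<lambda>i::nat. if i = 0 then a else if i = 1 then b else \<one>"
  have g: "goodw G ?w" unfolding goodw_def
  proof (intro allI impI)
    fix T and f :: "nat \<Rightarrow> _" assume T: "subgroup T G" and f: "\<forall>i. f i \<in> T"
    have fc: "f 0 \<in> carrier G" "f 1 \<in> carrier G" using f subgroup.subset[OF T] by auto
    have "word_eval G ?w f = f 0 \<otimes> f 1 \<otimes> inv (f 0) \<otimes> inv (f 1)"
      using fc by (simp add: m_assoc)
    also have "\<dots> \<in> derived G T" unfolding derived_def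
      using f by (intro generate.incl) blast
    finally show "word_eval G ?w f \<in> derived G T" .
  qed
  have ac: "a \<in> carrier G" "b \<in> carrier G" using ab Sc by auto
  have "word_eval G ?w ?f = h" using ab(3) ac by (simp add: m_assoc)
  then show ?case using g ab subgroup.one_closed[OF assms(2)]
    by (intro exI[of _ ?w] exI[of _ ?f]) auto
next
  case (inv h)
  then obtain a b where ab: "a \<in> S" "b \<in> S" "h = a \<otimes> b \<otimes> inv a \<otimes> inv b" by blast
  have Sc: "S \<subseteq> carrier G" using subgroup.subset[OF assms(2)] .
  let ?w = "[(1::nat,True),(0,True),(1,False),(0,False)]"
  let ?f = "\<lambda>i::nat. if i = 0 then a else if i = 1 then b else \<one>"
  have g: "goodw G ?w" unfolding goodw_def
  proof (intro allI impI)
    fix T and f :: "nat \<Rightarrow> _" assume T: "subgroup T G" and f: "\<forall>i. f i \<in> T"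
    have fc: "f 0 \<in> carrier G" "f 1 \<in> carrier G" using f subgroup.subset[OF T] by auto
    have "word_eval G ?w f = f 1 \<otimes> f 0 \<otimes> inv (f 1) \<otimes> inv (f 0)"
      using fc by (simp add: m_assoc)
    also have "\<dots> \<in> derived G T" unfolding derived_def
      using f by (intro generate.incl) blast
    finally show "word_eval G ?w f \<in> derived G T" .
  qed
  have ac: "a \<in> carrier G" "b \<in> carrier G" using ab Sc by auto
  have "inv h = b \<otimes> a \<otimes> inv b \<otimes> inv a"
    using ac ab(3) by (simp add: inv_mult_group m_assoc)
  moreover have "word_eval G ?w ?f = b \<otimes> a \<otimes> inv b \<otimes> inv a" using ac by (auto simp: m_assoc)
  ultimately show ?case using g ab subgroup.one_closed[OF assms(2)]
    by (intro exI[of _ ?w] exI[of _ ?f]) auto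
next
  case (eng h1 h2)
  then obtain w1 f1 w2 f2 where
    1: "\<forall>i. f1 i \<in> S" "word_eval G w1 f1 = h1" "goodw G w1" and
    2: "\<forall>i. f2 i \<in> S" "word_eval G w2 f2 = h2" "goodw G w2" by blast
  let ?w = "map (\<lambda>(i, e). (2*i, e)) w1 @ map (\<lambda>(i, e). (2*i+1, e)) w2"
  let ?f = "\<lambda>i::nat. if even i then f1 (i div 2) else f2 (i div 2)"
  have fS: "\<forall>i. ?f i \<in> S" using 1 2 by auto
  have fc: "\<forall>i. ?f i \<in> carrier G" using fS subgroup.subset[OF assms(2)] by blast
  have e1: "?f \<circ> (\<lambda>i. 2*i) = f1" and e2: "?f \<circ> (\<lambda>i. 2*i+1) = f2" by auto
  have "word_eval G ?w ?f = h1 \<otimes> h2"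
    unfolding word_eval_append[OF is_group fc] word_eval_map e1 e2 using 1 2 by simp
  moreover have "goodw G ?w" using goodw_append[OF is_group goodw_map[OF 1(3)] goodw_map[OF 2(3)]] .
  ultimately show ?case using fS
    by (intro exI[of _ ?w] exI[of _ ?f]) simp
qed

theorem proposition1:
  fixes G :: "('a, 'b) monoid_scheme" and H :: "'a set"
  assumes "group G"
    and "solvable G"
    and "subgroup H G"
    and "H \<subseteq> derived G (carrier G)"
    and "verbally_closed G H"
  shows "H = {\<one>\<^bsub>G\<^esub>}"
proof -
  interpret group G by fact
  have step: "H \<subseteq> derived G H"
  proof
    fix h assume h: "h \<in> H"
    have "h \<in> derived G (carrier G)" using h assms(4) by (rule subsetD[rotated])
    then have "\<exists>w f. (\<forall>i. f i \<in> carrier G) \<and> word_eval G w f = h \<and> goodw G w"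
      by (rule derived_words[OF _ subgroup_self])
    then obtain w f where wf0: "(\<forall>i. f i \<in> carrier G) \<and> word_eval G w f = h \<and> goodw G w"
      by (elim exE)
    then have wf: "\<forall>i. f i \<in> carrier G" "word_eval G w f = h" "goodw G w" by auto
    have sol: "has_solution_in G (carrier G) w h" unfolding has_solution_in_def
      using wf(1,2) by (intro exI[of _ f]) simp
    have vc: "\<forall>w. \<forall>h\<in>H. has_solution_in G (carrier G) w h \<longrightarrow> has_solution_in G H w h"
      using assms(5) unfolding verbally_closed_def .
    have "has_solution_in G H w h" using vc h sol by simp
    then obtain f' where f'0: "(\<forall>i. f' i \<in> H) \<and> word_eval G w f' = h"
      unfolding has_solution_in_def by (elim exE)
    then have f': "\<forall>i. f' i \<in> H" "word_eval G w f' = h" by auto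
    have "word_eval G w f' \<in> derived G H" using wf(3) assms(3) f'(1) unfolding goodw_def by simp
    then show "h \<in> derived G H" using f'(2) by simp
  qed
  have all: "H \<subseteq> (derived G ^^ n) H" for n
  proof (induction n)
    case 0 then show ?case by simp
  next
    case (Suc n)
    have "derived G H \<subseteq> derived G ((derived G ^^ n) H)" using mono_derived[OF Suc] .
    then show ?case using step by simp
  qed
  have "\<exists>n. (derived G ^^ n) (carrier G) = {\<one>\<^bsub>G\<^esub>}"
    using assms(2) solvable_iff_trivial_derived_seq by simp
  then obtain n where n: "(derived G ^^ n) (carrier G) = {\<one>\<^bsub>G\<^esub>}" by (elim exE)
  have "H \<subseteq> {\<one>\<^bsub>G\<^esub>}"
    using subset_trans[OF all[of n] mono_exp_of_derived[OF subgroup.subset[OF assms(3)], of n]] n by simp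
  then show ?thesis using subgroup.one_closed[OF assms(3)] by blast
qed

end
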